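(* Let $\widehat{T}=\begin{bmatrix}\hat t_{11}&\hat t_{12}\\0&\hat t_{22}\end{bmatrix}$ be a real matrix with $\hat t_{11}>0$, $\hat t_{12}\ge 0$, $\hat t_{22}\ge 0$ and $\hat t_{11}^2\ge \hat t_{12}^2+\hat t_{22}^2$. Put $x=\hat t_{12}/\hat t_{11}$, $y=\hat t_{22}/\hat t_{11}$, and assume $x\neq 1$. Define $$\tan(2\varphi)=\frac{-2xy}{(y-x)(y+x)+1},\qquad \tan\varphi=\frac{\tan(2\varphi)}{1+\sqrt{1+\tan^2(2\varphi)}},\qquad \cos\varphi=\frac{1}{\sqrt{1+\tan^2\varphi}},\quad \sin\varphi=\tan\varphi\cos\varphi,$$ $$\tanh\psi=-(x+y\tan\varphi).$$ Then the denominator of $\tan(2\varphi)$ is positive, $-1<\tan\varphi\le 0$, and $|\tanh\psi|<1$; hence $\cosh\psi=1/\sqrt{1-\tanh^2\psi}$ and $\sinh\psi=\tanh\psi\cosh\psi$ are well defined, and $$\begin{bmatrix}\cos\varphi&\sin\varphi\\-\sin\varphi&\cos\varphi\end{bmatrix}\widehat{T}\begin{bmatrix}\cosh\psi&\sinh\psi\\\sinh\psi&\cosh\psi\end{bmatrix}=\begin{bmatrix}\tilde\sigma_{11}'&0\\0&\tilde\sigma_{22}'\end{bmatrix},\qquad \tilde\sigma_{11}'=\frac{\cos\varphi}{\cosh\psi}\hat t_{11},\quad \tilde\sigma_{22}'=\frac{\cosh\psi}{\cos\varphi}\hat t_{22}.$$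
   Context: The left factor is a plane rotation (orthogonal) and the right factor is a hyperbolic rotation, which is $\widehat{J}$-orthogonal for $\widehat{J}=\mathrm{diag}(1,-1)$ or $\mathrm{diag}(-1,1)$ (i.e. $\widehat V^T\widehat J\widehat V=\widehat J$). This is the $2\times 2$ hyperbolic SVD of $\widehat T$ in the hyperbolic (indefinite $\widehat J$) case with $\widehat T$ upper triangular. *)

theory Defs
  imports "HOL-Analysis.Analysis"
begin

definition mat2 :: "real \<Rightarrow> real \<Rightarrow> real \<Rightarrow> real \<Rightarrow> real^2^2" where
  "mat2 a b c d = (\<chi> i j. if i = 1 then (if j = 1 then a else b)
                            else (if j = 1 then c else d))"

end

theory Submission
  imports Defs
begin

theorem theorem2p2:
  fixes t11 t12 t22 :: real
  assumes "t11 > 0" and "t12 \<ge> 0" and "t22 \<ge> 0"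
    and "t11\<^sup>2 \<ge> t12\<^sup>2 + t22\<^sup>2"
  defines "x \<equiv> t12 / t11"
  defines "y \<equiv> t22 / t11"
  assumes "x \<noteq> 1"
  defines "tan2 \<equiv> (-2 * x * y) / ((y - x) * (y + x) + 1)"
  defines "tn \<equiv> tan2 / (1 + sqrt (1 + tan2\<^sup>2))"
  defines "c \<equiv> 1 / sqrt (1 + tn\<^sup>2)"
  defines "s \<equiv> tn * c"
  defines "th \<equiv> -(x + y * tn)"
  defines "ch \<equiv> 1 / sqrt (1 - th\<^sup>2)"
  defines "sh \<equiv> th * ch"
  shows "(y - x) * (y + x) + 1 > 0
      \<and> (-1 < tn \<and> tn \<le> 0)
      \<and> \<bar>th\<bar> < 1
      \<and> mat2 c s (-s) c ** mat2 t11 t12 0 t22 ** mat2 ch sh sh ch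
           = mat2 (c / ch * t11) 0 0 (ch / c * t22)"
proof -
  have x0: "x \<ge> 0" and y0: "y \<ge> 0" using assms(1-3) by (simp_all add: x_def y_def)
  have xy1: "x\<^sup>2 + y\<^sup>2 \<le> 1"
  proof -
    have "x\<^sup>2 + y\<^sup>2 = (t12\<^sup>2 + t22\<^sup>2) / t11\<^sup>2" by (simp add: x_def y_def power_divide add_divide_distrib)
    also have "\<dots> \<le> 1" using assms(1,4) by simp
    finally show ?thesis .
  qed
  have x1: "x < 1"
  proof -
    have "x\<^sup>2 \<le> 1" using xy1 by (smt (verit) zero_le_power2)
    hence "x \<le> 1" using x0 by (smt (verit) power2_eq_square mult_less_cancel_left1)
    thus ?thesis using \<open>x \<noteq> 1\<close> by linarith
  qed
  have y1: "y \<le> 1"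
  proof -
    have "y\<^sup>2 \<le> 1" using xy1 by (smt (verit) zero_le_power2)
    thus "y \<le> 1" using y0 by (smt (verit) power2_eq_square mult_less_cancel_left1)
  qed
  define D where "D = (y - x) * (y + x) + 1"
  have D: "D > 0"
  proof -
    have "D = 1 - x\<^sup>2 + y\<^sup>2" by (simp add: D_def algebra_simps power2_eq_square)
    moreover have "x\<^sup>2 < 1" using x0 x1 by (smt (verit) power2_eq_square mult_less_cancel_left1 mult_nonneg_nonneg)
    ultimately show ?thesis by (smt (verit) zero_le_power2)
  qed
  have t0: "tan2 \<le> 0" using D x0 y0 unfolding tan2_def D_def[symmetric]
    by (simp add: divide_nonpos_pos)
  define S where "S = sqrt (1 + tan2\<^sup>2)"
  have S2: "S\<^sup>2 = 1 + tan2\<^sup>2" unfolding S_def by simp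
  have Sge: "S > \<bar>tan2\<bar>" unfolding S_def
    by (metis real_sqrt_abs real_sqrt_less_mono less_add_one add.commute power2_abs)
  have Spos: "S > 0" using Sge by linarith
  have tnS: "tn = tan2 / (1 + S)" by (simp add: tn_def S_def)
  have tnl: "-1 < tn" "tn \<le> 0" using t0 Sge Spos unfolding tnS
    by (auto simp: divide_nonpos_pos field_simps)
  have key: "2 * tn = tan2 * (1 - tn\<^sup>2)"
  proof -
    have ta: "tan2 = tn * (1 + S)" unfolding tnS using Spos by simp
    have "(S - 1) * (S + 1) = tn\<^sup>2 * (1 + S) * (1 + S)"
      using S2 ta by (simp add: algebra_simps power2_eq_square)
    hence "(S - 1) * (1 + S) = (tn\<^sup>2 * (1 + S)) * (1 + S)" by (simp add: algebra_simps)
    hence "S - 1 = tn\<^sup>2 * (1 + S)" using Spos by (metis mult_right_cancel add_pos_pos zero_less_one less_irrefl)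
    hence "(1 + S) * (1 - tn\<^sup>2) = 2" by (simp add: algebra_simps)
    thus ?thesis using ta by (metis mult.assoc mult.right_neutral mult.commute)
  qed
  have key2: "tn * D + x * y * (1 - tn\<^sup>2) = 0"
  proof -
    have e: "tan2 * D = -2 * x * y" using D unfolding tan2_def D_def[symmetric] by simp
    have "2 * tn * D = tan2 * D * (1 - tn\<^sup>2)" using arg_cong[OF key, of "\<lambda>z. z * D"] by (simp add: algebra_simps)
    also have "\<dots> = -2 * x * y * (1 - tn\<^sup>2)" by (simp only: e)
    finally show ?thesis by (simp add: algebra_simps)
  qed
  have tnabs: "\<bar>tn\<bar> < 1" using tnl by simp
  have th1: "\<bar>th\<bar> < 1"
  proof -
    have a: "y * tn \<le> 0" using y0 tnl by (simp add: mult_nonneg_nonpos)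
    have b: "y * tn > -1"
    proof -
      have "y * (-tn) < 1" using y0 y1 tnl
        by (smt (verit) mult_left_le_one_le mult_nonneg_nonneg mult_less_cancel_left1 mult_le_cancel_left1)
      thus ?thesis by simp
    qed
    show ?thesis unfolding th_def using a b x0 x1 by simp
  qed
  have p1: "0 < 1 + tn\<^sup>2" by (smt (verit) zero_le_power2)
  have cpos: "c > 0" unfolding c_def using p1 by simp
  have c2: "c\<^sup>2 * (1 + tn\<^sup>2) = 1" unfolding c_def
    by (simp add: power_divide p1 less_imp_neq[OF p1, symmetric])
  have th2: "th\<^sup>2 < 1" using th1 by (metis abs_square_less_1)
  have chpos: "ch > 0" unfolding ch_def using th2 by simp
  have ch2: "ch\<^sup>2 * (1 - th\<^sup>2) = 1" unfolding ch_def using th2 by (simp add: power_divide)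
  have t12e: "t12 = x * t11" and t22e: "t22 = y * t11" using assms(1) by (simp_all add: x_def y_def)
  have e11: "(c * t11 + 0) * ch + (c * t12 + s * t22) * sh = c / ch * t11"
  proof -
    have "(c * t11 + 0) * ch + (c * t12 + s * t22) * sh = c * t11 * ch * (1 - th\<^sup>2)"
      unfolding s_def sh_def t12e t22e th_def by (simp add: algebra_simps power2_eq_square)
    also have "\<dots> = c * t11 * ch * (1 / ch\<^sup>2)" using ch2 chpos by (simp add: eq_divide_eq mult.commute)
    also have "\<dots> = c / ch * t11" using chpos by (simp add: power2_eq_square)
    finally show ?thesis .
  qed
  have e12: "(c * t11 + 0) * sh + (c * t12 + s * t22) * ch = 0"
    unfolding s_def sh_def t12e t22e th_def by (simp add: algebra_simps)
  have e21: "(- s * t11 + 0) * ch + (- s * t12 + c * t22) * sh = 0"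
  proof -
    have "(- s * t11 + 0) * ch + (- s * t12 + c * t22) * sh
       = - c * t11 * ch * (tn * D + x * y * (1 - tn\<^sup>2))"
      unfolding s_def sh_def t12e t22e th_def D_def by (simp add: algebra_simps power2_eq_square)
    thus ?thesis using key2 by simp
  qed
  have e22: "(- s * t11 + 0) * sh + (- s * t12 + c * t22) * ch = ch / c * t22"
  proof -
    have "(- s * t11 + 0) * sh + (- s * t12 + c * t22) * ch = c * ch * t22 * (1 + tn\<^sup>2)"
      unfolding s_def sh_def t12e t22e th_def by (simp add: algebra_simps power2_eq_square)
    also have "\<dots> = c * ch * t22 * (1 / c\<^sup>2)" using c2 cpos by (simp add: eq_divide_eq mult.commute)
    also have "\<dots> = ch / c * t22" using cpos by (simp add: power2_eq_square)
    finally show ?thesis .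
  qed
  have M: "mat2 c s (-s) c ** mat2 t11 t12 0 t22 ** mat2 ch sh sh ch
           = mat2 (c / ch * t11) 0 0 (ch / c * t22)"
    unfolding matrix_matrix_mult_def mat2_def
    using e11 e12 e21 e22
    by (simp add: vec_eq_iff forall_2 sum_2)
  show ?thesis using D tnl th1 M by (simp add: D_def)
qed

end
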